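(* Let integers $n \geq 0$, $m \geq 2$, $k \geq 1$ and $1 \leq r < m$ be given, and let $p=(p_1,\dots,p_m)$ be a probability distribution on $\{1,\dots,m\}$ with $p_1+\dots+p_r < 1$. Throw $n$ balls independently into $m$ bins, each ball landing in bin $i$ with probability $p_i$, and let $M^{(r)}_n$ be the maximum load among bins $1,\dots,r$. Let $\|p\|_{k,r} = \left(\sum_{i=1}^r p_i^k\right)^{1/k}$. Then \[ \Pr[\mathrm{Bin}(n, \|p\|_{k,r}) \geq k] \;\leq\; \Pr[M^{(r)}_n \geq k] \;\leq\; \binom{n}{k}\|p\|_{k,r}^{k}. \]
   Context: $\mathrm{Bin}(n,\alpha)$ denotes a binomial random variable with $n$ trials and success probability $\alpha$. The load of a bin is the number of balls that landed in it. *)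

theory Defs
  imports "HOL-Probability.Probability"
begin

text \<open>Balls are indexed by 0..<n; an outcome is a function assigning each ball its bin.
  The n balls are thrown independently, each according to the bin distribution P.\<close>

definition balls_in_bins :: "nat \<Rightarrow> nat pmf \<Rightarrow> (nat \<Rightarrow> nat) pmf" where
  "balls_in_bins n P = Pi_pmf {..<n} 0 (\<lambda>_. P)"

definition load :: "nat \<Rightarrow> (nat \<Rightarrow> nat) \<Rightarrow> nat \<Rightarrow> nat" where
  "load n \<omega> i = card {j \<in> {..<n}. \<omega> j = i}"

definition max_load_r :: "nat \<Rightarrow> nat \<Rightarrow> (nat \<Rightarrow> nat) \<Rightarrow> nat" where
  "max_load_r n r \<omega> = Max (load n \<omega> ` {1..r})"

definition knorm_r :: "nat pmf \<Rightarrow> nat \<Rightarrow> nat \<Rightarrow> real" where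
  "knorm_r P k r = (\<Sum>i=1..r. pmf P i ^ k) powr (1 / real k)"

end

theory Submission
  imports Defs
begin

lemma prob_bind_pmf:
  "measure_pmf.prob (bind_pmf M f) X = measure_pmf.expectation M (\<lambda>x. measure_pmf.prob (f x) X)"
  unfolding measure_pmf_bind
  by (subst measure_pmf.measure_bind[where N="count_space UNIV"]) (auto simp: space_subprob_algebra measure_pmf_in_subprob_algebra intro: prob_space_imp_subprob_space measure_pmf.prob_space_axioms)

lemma balls_Suc:
  "balls_in_bins (Suc n) P = bind_pmf P (\<lambda>y. map_pmf (\<lambda>f. f(n:=y)) (balls_in_bins n P))"
  unfolding balls_in_bins_def lessThan_Suc
  by (subst Pi_pmf_insert) (auto simp: map_pmf_def pair_pmf_def bind_assoc_pmf bind_return_pmf)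

lemma load_upd: "load (Suc n) (f(n:=y)) i = load n f i + (if y = i then 1 else 0)"
proof -
  have "{j \<in> {..<Suc n}. (f(n:=y)) j = i} = {j \<in> {..<n}. f j = i} \<union> (if y = i then {n} else {})"
    by (auto simp: less_Suc_eq)
  then show ?thesis unfolding load_def by (auto simp: card_insert_if)
qed

lemma load_upd_fun: "load (Suc n) (f(n:=y)) = (\<lambda>i. load n f i + (if y = i then 1 else 0))"
  by (rule ext) (rule load_upd)

lemma prob_balls_Suc:
  assumes "set_pmf P \<subseteq> {1..m}"
  shows "measure_pmf.prob (balls_in_bins (Suc n) P) {f. Q (load (Suc n) f)}
     = (\<Sum>y\<in>{1..m}. pmf P y * measure_pmf.prob (balls_in_bins n P) {f. Q (\<lambda>i. load n f i + (if y = i then 1 else 0))})"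
proof -
  have "measure_pmf.prob (balls_in_bins (Suc n) P) {f. Q (load (Suc n) f)}
     = measure_pmf.expectation P (\<lambda>y. measure_pmf.prob (balls_in_bins n P) {f. Q (\<lambda>i. load n f i + (if y = i then 1 else 0))})"
    unfolding balls_Suc prob_bind_pmf by (simp add: load_upd_fun vimage_def)
  also have "\<dots> = (\<Sum>y\<in>{1..m}. measure_pmf.prob (balls_in_bins n P) {f. Q (\<lambda>i. load n f i + (if y = i then 1 else 0))} * pmf P y)"
    by (rule integral_measure_pmf_real) (use assms in auto)
  finally show ?thesis by (simp add: mult.commute)
qed


fun Psi :: "nat \<Rightarrow> real \<Rightarrow> (nat \<Rightarrow> real) \<Rightarrow> (nat \<Rightarrow> nat) \<Rightarrow> nat \<Rightarrow> real" where
  "Psi n t p \<kappa> 0 = t ^ n"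
| "Psi n t p \<kappa> (Suc r) = (\<Sum>j<\<kappa> (Suc r). real (n choose j) * p (Suc r) ^ j * Psi (n - j) (t - p (Suc r)) p \<kappa> r)"

lemma Psi_cong: "(\<And>i. i \<in> {1..r} \<Longrightarrow> \<kappa> i = \<kappa>' i) \<Longrightarrow> Psi n t p \<kappa> r = Psi n t p \<kappa>' r"
proof (induction r arbitrary: n t)
  case 0
  then show ?case by simp
next
  case (Suc r)
  have "\<kappa> (Suc r) = \<kappa>' (Suc r)" using Suc.prems by auto
  moreover have "\<And>m t. Psi m t p \<kappa> r = Psi m t p \<kappa>' r" using Suc by auto
  ultimately show ?case by simp
qed

lemma Psi_0: "Psi 0 t p \<kappa> r = (if \<forall>i\<in>{1..r}. 0 < \<kappa> i then 1 else 0)"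
proof (induction r arbitrary: t)
  case 0
  then show ?case by simp
next
  case (Suc r)
  have "(\<Sum>j<\<kappa> (Suc r). real (0 choose j) * p (Suc r) ^ j * Psi (0 - j) (t - p (Suc r)) p \<kappa> r)
     = (if 0 < \<kappa> (Suc r) then Psi 0 (t - p (Suc r)) p \<kappa> r else 0)"
  proof (cases "\<kappa> (Suc r)")
    case 0 then show ?thesis by simp
  next
    case (Suc K)
    then show ?thesis by (simp add: lessThan_Suc_eq_insert_0 sum.reindex)
  qed
  then show ?case using Suc by (auto simp: le_Suc_eq intro!: bexI[of _ "Suc r"])
qed

lemma Psi_rec:
  "Psi (Suc n) t p \<kappa> r = (\<Sum>i=1..r. p i * Psi n t p (\<kappa>(i := \<kappa> i - 1)) r) + (t - (\<Sum>i=1..r. p i)) * Psi n t p \<kappa> r"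
proof (induction r arbitrary: n t \<kappa>)
  case 0
  then show ?case by simp
next
  case (Suc r)
  define x where "x = p (Suc r)"
  define F where "F = (\<lambda>m \<kappa>'. Psi m (t - x) p \<kappa>' r)"
  define S where "S = (\<Sum>i=1..r. p i)"
  have SS: "(\<Sum>i=1..Suc r. p i) = S + x" by (simp add: S_def x_def)
  have PsiS: "Psi m t p \<kappa>' (Suc r) = (\<Sum>j<\<kappa>' (Suc r). real (m choose j) * x ^ j * F (m - j) \<kappa>')" for m \<kappa>'
    by (simp add: F_def x_def)
  have Fcong: "F m (\<kappa>'(Suc r := z)) = F m \<kappa>'" for m \<kappa>' z
    unfolding F_def by (rule Psi_cong) auto
  show ?case
  proof (cases "\<kappa> (Suc r)")
    case 0
    have "Psi m t p \<kappa>' (Suc r) = 0" if "\<kappa>' (Suc r) = 0" for m \<kappa>'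
      using that by simp
    then show ?thesis using 0 by simp
  next
    case (Suc K)
    have IH: "F (Suc m) \<kappa>' = (\<Sum>i=1..r. p i * F m (\<kappa>'(i := \<kappa>' i - 1))) + (t - x - S) * F m \<kappa>'" for m \<kappa>'
      unfolding F_def S_def by (rule Suc.IH)
    have A: "(\<Sum>j<\<kappa> (Suc r). real (Suc n choose j) * x ^ j * F (Suc n - j) \<kappa>)
       = (\<Sum>j<\<kappa> (Suc r). real (n choose j) * x ^ j * F (Suc n - j) \<kappa>)
         + x * (\<Sum>j<K. real (n choose j) * x ^ j * F (n - j) \<kappa>)"
      unfolding Suc sum.lessThan_Suc_shift by (simp add: sum.distrib algebra_simps sum_distrib_left)
    have B: "real (n choose j) * x ^ j * F (Suc n - j) \<kappa>
        = (\<Sum>i=1..r. p i * (real (n choose j) * x ^ j * F (n - j) (\<kappa>(i := \<kappa> i - 1))))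
          + (t - x - S) * (real (n choose j) * x ^ j * F (n - j) \<kappa>)" for j
    proof (cases "j \<le> n")
      case True
      then have "Suc n - j = Suc (n - j)" by simp
      then show ?thesis by (simp add: IH algebra_simps sum_distrib_left sum_distrib_right)
    next
      case False
      then have h0: "real (n choose j) = 0" by simp
      show ?thesis by (simp only: h0) simp
    qed
    have C: "(\<Sum>j<\<kappa> (Suc r). real (n choose j) * x ^ j * F (Suc n - j) \<kappa>)
       = (\<Sum>i=1..r. p i * Psi n t p (\<kappa>(i := \<kappa> i - 1)) (Suc r)) + (t - x - S) * Psi n t p \<kappa> (Suc r)"
    proof -
      have "(\<Sum>j<\<kappa> (Suc r). real (n choose j) * x ^ j * F (Suc n - j) \<kappa>)
        = (\<Sum>i=1..r. p i * (\<Sum>j<\<kappa> (Suc r). real (n choose j) * x ^ j * F (n - j) (\<kappa>(i := \<kappa> i - 1))))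
          + (t - x - S) * (\<Sum>j<\<kappa> (Suc r). real (n choose j) * x ^ j * F (n - j) \<kappa>)"
        by (simp add: B sum.distrib sum_distrib_left) (rule sum.swap)
      also have "\<dots> = (\<Sum>i=1..r. p i * Psi n t p (\<kappa>(i := \<kappa> i - 1)) (Suc r)) + (t - x - S) * Psi n t p \<kappa> (Suc r)"
        by (intro arg_cong2[where f="(+)"] sum.cong refl) (auto simp: F_def x_def)
      finally show ?thesis .
    qed
    have D: "(\<Sum>j<K. real (n choose j) * x ^ j * F (n - j) \<kappa>) = Psi n t p (\<kappa>(Suc r := \<kappa> (Suc r) - 1)) (Suc r)"
      using Fcong[of _ \<kappa> K] by (simp add: F_def x_def Suc)
    have E: "(\<Sum>i=1..Suc r. g i) = (\<Sum>i=1..r. g i) + g (Suc r)" for g :: "nat \<Rightarrow> real" by simp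
    have "Psi (Suc n) t p \<kappa> (Suc r) = (\<Sum>j<\<kappa> (Suc r). real (Suc n choose j) * x ^ j * F (Suc n - j) \<kappa>)"
      by (rule PsiS)
    also have "\<dots> = (\<Sum>i=1..r. p i * Psi n t p (\<kappa>(i := \<kappa> i - 1)) (Suc r)) + (t - x - S) * Psi n t p \<kappa> (Suc r)
        + x * Psi n t p (\<kappa>(Suc r := \<kappa> (Suc r) - 1)) (Suc r)"
      by (simp only: A C D)
    also have "\<dots> = (\<Sum>i=1..Suc r. p i * Psi n t p (\<kappa>(i := \<kappa> i - 1)) (Suc r)) + (t - (\<Sum>i=1..Suc r. p i)) * Psi n t p \<kappa> (Suc r)"
      by (simp only: E SS) (simp del: Psi.simps add: x_def S_def algebra_simps)
    finally show ?thesis .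
  qed
qed


lemma sum_pmf_split:
  fixes m r :: nat
  assumes "set_pmf P \<subseteq> {1..m}" "r \<le> m"
  shows "(\<Sum>y\<in>{1..m}-{1..r}. pmf P y) = 1 - (\<Sum>y=1..r. pmf P y)"
proof -
  have "(\<Sum>y\<in>{1..m}. pmf P y) = 1" using assms by (intro sum_pmf_eq_1) auto
  moreover have "(\<Sum>y\<in>{1..m}. pmf P y) = (\<Sum>y=1..r. pmf P y) + (\<Sum>y\<in>{1..m}-{1..r}. pmf P y)"
    using assms sum.subset_diff[of "{1..r}" "{1..m}" "pmf P"] by (simp add: add.commute)
  ultimately show ?thesis by simp
qed

lemma prob_all_lt:
  assumes "set_pmf P \<subseteq> {1..m}" "r \<le> m"
  shows "measure_pmf.prob (balls_in_bins n P) {\<omega>. \<forall>i\<in>{1..r}. load n \<omega> i < \<kappa> i} = Psi n 1 (pmf P) \<kappa> r"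
proof (induction n arbitrary: \<kappa>)
  case 0
  have "load 0 \<omega> i = 0" for \<omega> i by (simp add: load_def)
  then show ?case by (simp add: Psi_0)
next
  case (Suc n)
  define f where "f = (\<lambda>\<kappa>. measure_pmf.prob (balls_in_bins n P) {\<omega>. \<forall>i\<in>{1..r}. load n \<omega> i < \<kappa> i})"
  have "measure_pmf.prob (balls_in_bins (Suc n) P) {\<omega>. \<forall>i\<in>{1..r}. load (Suc n) \<omega> i < \<kappa> i}
     = (\<Sum>y\<in>{1..m}. pmf P y * measure_pmf.prob (balls_in_bins n P) {f. \<forall>i\<in>{1..r}. load n f i + (if y = i then 1 else 0) < \<kappa> i})"
    using prob_balls_Suc[OF assms(1), of n "\<lambda>L. \<forall>i\<in>{1..r}. L i < \<kappa> i"] by simp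
  also have "\<dots> = (\<Sum>y\<in>{1..m}. pmf P y * (if y \<in> {1..r} then f (\<kappa>(y := \<kappa> y - 1)) else f \<kappa>))"
  proof (intro sum.cong refl arg_cong2[where f="(*)"])
    fix y assume "y \<in> {1..m}"
    show "measure_pmf.prob (balls_in_bins n P) {f. \<forall>i\<in>{1..r}. load n f i + (if y = i then 1 else 0) < \<kappa> i}
        = (if y \<in> {1..r} then f (\<kappa>(y := \<kappa> y - 1)) else f \<kappa>)"
    proof (cases "y \<in> {1..r}")
      case True
      have "(\<forall>i\<in>{1..r}. load n f i + (if y = i then 1 else 0) < \<kappa> i) \<longleftrightarrow> (\<forall>i\<in>{1..r}. load n f i < (\<kappa>(y := \<kappa> y - 1)) i)" for f
        by (intro ball_cong refl, case_tac "y = x") auto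
      then have "{f. \<forall>i\<in>{1..r}. load n f i + (if y = i then 1 else 0) < \<kappa> i} = {\<omega>. \<forall>i\<in>{1..r}. load n \<omega> i < (\<kappa>(y := \<kappa> y - 1)) i}"
        by blast
      then show ?thesis unfolding f_def if_P[OF True] by simp
    next
      case False
      have "(\<forall>i\<in>{1..r}. load n f i + (if y = i then 1 else 0) < \<kappa> i) \<longleftrightarrow> (\<forall>i\<in>{1..r}. load n f i < \<kappa> i)" for f
        using False by (intro ball_cong refl) auto
      then have "{f. \<forall>i\<in>{1..r}. load n f i + (if y = i then 1 else 0) < \<kappa> i} = {\<omega>. \<forall>i\<in>{1..r}. load n \<omega> i < \<kappa> i}"
        by blast
      then show ?thesis unfolding f_def if_not_P[OF False] by simp
    qed
  qed
  also have "\<dots> = (\<Sum>y=1..r. pmf P y * f (\<kappa>(y := \<kappa> y - 1))) + (\<Sum>y\<in>{1..m}-{1..r}. pmf P y) * f \<kappa>"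
    using assms by (subst sum.subset_diff[of "{1..r}"]) (auto simp: sum_distrib_right intro!: sum.cong)
  also have "\<dots> = Psi (Suc n) 1 (pmf P) \<kappa> r"
    by (simp only: Psi_rec sum_pmf_split[OF assms] f_def Suc.IH)
  finally show ?case .
qed


definition Gf :: "real \<Rightarrow> nat \<Rightarrow> nat \<Rightarrow> real \<Rightarrow> real" where
  "Gf s m k x = (\<Sum>j\<in>{k..m}. real (m choose j) * x ^ j * (s - x) ^ (m - j))"

lemma Gf_deriv:
  assumes "1 \<le> k" "k \<le> m"
  shows "DERIV (Gf s m k) x :> real m * real ((m - 1) choose (k - 1)) * x ^ (k - 1) * (s - x) ^ (m - k)"
  using assms(2)
proof (induction k rule: inc_induct)
  case base
  have "Gf s m m = (\<lambda>x. x ^ m)" by (auto simp: Gf_def fun_eq_iff)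
  then show ?case by (auto intro!: derivative_eq_intros)
next
  case (step n)
  have n1: "1 \<le> n" using assms step by simp
  obtain a where a: "n = Suc a" using n1 by (cases n) auto
  obtain b where b: "m - n = Suc b" using step by (metis Suc_diff_Suc)
  have split: "Gf s m n = (\<lambda>x. real (m choose n) * x ^ n * (s - x) ^ (m - n) + Gf s m (Suc n) x)"
  proof -
    have "{n..m} = insert n {Suc n..m}" using step by auto
    then show ?thesis by (auto simp: Gf_def fun_eq_iff)
  qed
  have mb: "m - Suc n = b" using b by simp
  have nat1: "(m choose n) * n = m * ((m - 1) choose (n - 1))"
    using binomial_absorption[of a m] a by (simp add: mult.commute)
  have id1: "real (m choose n) * real n = real m * real ((m - 1) choose (n - 1))"
    using nat1 by (metis of_nat_mult)
  have id2: "real (m choose n) * real (m - n) = real m * real ((m - 1) choose n)"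
    using binomial_absorb_comp[of m n] by (simp add: of_nat_mult[symmetric] mult.commute del: of_nat_mult)
  have dA: "DERIV (\<lambda>x. real (m choose n) * x ^ n * (s - x) ^ (m - n) + Gf s m (Suc n) x) x :>
     real (m choose n) * (real n * x ^ (n - 1) * (s - x) ^ (m - n) - x ^ n * (real (m - n) * (s - x) ^ (m - n - 1)))
     + real m * real ((m - 1) choose (Suc n - 1)) * x ^ (Suc n - 1) * (s - x) ^ (m - Suc n)"
  proof -
    have dT: "DERIV (\<lambda>x. real (m choose n) * x ^ n * (s - x) ^ (m - n)) x :>
       real (m choose n) * (real n * x ^ (n - 1) * (s - x) ^ (m - n) - x ^ n * (real (m - n) * (s - x) ^ (m - n - 1)))"
      apply (rule derivative_eq_intros refl | simp)+
      apply (simp add: algebra_simps)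
      done
    show ?thesis using DERIV_add[OF dT step.IH] by simp
  qed
  have eq: "real (m choose n) * (real n * x ^ (n - 1) * (s - x) ^ (m - n) - x ^ n * (real (m - n) * (s - x) ^ (m - n - 1)))
     + real m * real ((m - 1) choose (Suc n - 1)) * x ^ (Suc n - 1) * (s - x) ^ (m - Suc n) = real m * real ((m - 1) choose (n - 1)) * x ^ (n - 1) * (s - x) ^ (m - n)"
  proof -
    have "real (m choose n) * (real n * x ^ (n - 1) * (s - x) ^ (m - n) - x ^ n * (real (m - n) * (s - x) ^ (m - n - 1)))
       = (real (m choose n) * real n) * x ^ (n - 1) * (s - x) ^ (m - n) - (real (m choose n) * real (m - n)) * x ^ n * (s - x) ^ (m - n - 1)"
      by (simp add: algebra_simps)
    also have "\<dots> = real m * real ((m - 1) choose (n - 1)) * x ^ (n - 1) * (s - x) ^ (m - n) - real m * real ((m - 1) choose n) * x ^ n * (s - x) ^ (m - n - 1)"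
      by (simp only: id1 id2)
    finally show ?thesis using mb b by simp
  qed
  show ?case unfolding split by (rule DERIV_cong[OF dA eq])
qed


lemma pow_sum_le:
  fixes a b :: real
  assumes "0 \<le> a" "0 \<le> b" "1 \<le> k"
  shows "a ^ k + b ^ k \<le> (a + b) ^ k"
  using assms(3)
proof (induction k rule: dec_induct)
  case base
  then show ?case by simp
next
  case (step k)
  have "a ^ Suc k + b ^ Suc k \<le> (a + b) * (a ^ k + b ^ k)"
    using assms by (simp add: algebra_simps)
  also have "\<dots> \<le> (a + b) * (a + b) ^ k"
    using step assms by (intro mult_left_mono) auto
  finally show ?case by simp
qed

lemma root_pow:
  fixes z :: real
  assumes "0 < z" "1 \<le> k"
  shows "(z powr (1 / real k)) ^ k = z"
proof -
  have "(z powr (1 / real k)) ^ k = (z powr (1 / real k)) powr (real k)"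
    using assms by (simp add: powr_realpow)
  also have "\<dots> = z" using assms by (simp add: powr_powr)
  finally show ?thesis .
qed

lemma pow_le_base:
  fixes x y :: real
  assumes "x ^ k \<le> y ^ k" "0 \<le> y" "1 \<le> k"
  shows "x \<le> y"
  using assms by (cases k) (auto intro: power_le_imp_le_base)

lemma Gf_0: "1 \<le> k \<Longrightarrow> Gf s m k 0 = 0"
  unfolding Gf_def by (intro sum.neutral) auto

lemma Gf_subadd:
  assumes "1 \<le> k" "k \<le> m" "0 \<le> a" "0 \<le> b" "a + b \<le> s" "0 \<le> c" "c ^ k = a ^ k + b ^ k"
  shows "Gf s m k c \<le> Gf s m k a + Gf s m k b"
proof (cases "a = 0")
  case True
  then have "c ^ k = b ^ k" using assms by simp
  then have "c = b" using assms by - (rule power_eq_imp_eq_base[of c k b], auto)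
  then show ?thesis using True Gf_0[OF assms(1)] by simp
next
  case False
  then have apos: "0 < a" using assms by simp
  define C where "C = (\<lambda>y::real. (a ^ k + y ^ k) powr (1 / real k))"
  define K where "K = real m * real ((m - 1) choose (k - 1))"
  have zpos: "0 < a ^ k + y ^ k" if "0 \<le> y" for y using apos that by (simp add: add_pos_nonneg)
  have Cpos: "0 < C y" if "0 \<le> y" for y using zpos[OF that] by (simp add: C_def)
  have Cpow: "C y ^ k = a ^ k + y ^ k" if "0 \<le> y" for y
    unfolding C_def using root_pow[OF zpos[OF that] assms(1)] .
  have Cge: "y \<le> C y" if "0 \<le> y" for y
    using Cpow[OF that] Cpos[OF that] that assms(1) apos
    by - (rule pow_le_base[of _ k], auto)
  have Cle: "C y \<le> a + y" if "0 \<le> y" for y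
    using Cpow[OF that] Cpos[OF that] that assms(1) apos pow_sum_le[of a y k]
    by - (rule pow_le_base[of _ k], auto)
  have C0: "C 0 = a"
    using Cpow[of 0] Cpos[of 0] apos assms(1) by - (rule power_eq_imp_eq_base[of _ k], auto)
  have Cb: "C b = c"
    using Cpow[of b] Cpos[of b] assms by - (rule power_eq_imp_eq_base[of _ k], auto)
  define \<psi> where "\<psi> = (\<lambda>y. Gf s m k a + Gf s m k y - Gf s m k (C y))"
  have "\<psi> 0 \<le> \<psi> b"
  proof (rule DERIV_nonneg_imp_nondecreasing[OF assms(4)])
    fix y assume y: "0 \<le> y" "y \<le> b"
    define z where "z = a ^ k + y ^ k"
    have z: "0 < z" using zpos[OF y(1)] by (simp add: z_def)
    have dz: "DERIV (\<lambda>y. a ^ k + y ^ k) y :> real k * y ^ (k - 1)"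
      by (auto intro!: derivative_eq_intros)
    have dC: "DERIV C y :> (1 / real k) * z powr (1 / real k - 1) * (real k * y ^ (k - 1))"
      unfolding C_def z_def using DERIV_fun_powr[OF dz zpos[OF y(1)], of "1 / real k"] by simp
    have dG1: "DERIV (Gf s m k) y :> K * y ^ (k - 1) * (s - y) ^ (m - k)"
      unfolding K_def by (rule Gf_deriv[OF assms(1,2)])
    have dG2: "DERIV (Gf s m k) (C y) :> K * C y ^ (k - 1) * (s - C y) ^ (m - k)"
      unfolding K_def by (rule Gf_deriv[OF assms(1,2)])
    have dpsi: "DERIV \<psi> y :> 0 + K * y ^ (k - 1) * (s - y) ^ (m - k)
        - K * C y ^ (k - 1) * (s - C y) ^ (m - k) * ((1 / real k) * z powr (1 / real k - 1) * (real k * y ^ (k - 1)))"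
      unfolding \<psi>_def
      by (intro DERIV_diff DERIV_add DERIV_const dG1 DERIV_chain2[OF dG2 dC])
    have key: "C y ^ (k - 1) * z powr (1 / real k - 1) = 1"
    proof -
      have e1: "z powr (1 / real k - 1) = C y / z"
        using z by (simp add: powr_diff C_def z_def)
      have e2: "C y ^ (k - 1) * C y = z"
        using Cpow[OF y(1)] assms(1) by (simp add: z_def power_Suc2[symmetric])
      have "C y ^ (k - 1) * z powr (1 / real k - 1) = (C y ^ (k - 1) * C y) / z"
        by (simp add: e1)
      also have "\<dots> = 1" using e2 z by simp
      finally show ?thesis .
    qed
    have kpos: "real k \<noteq> 0" using assms(1) by simp
    have "K * C y ^ (k - 1) * (s - C y) ^ (m - k) * ((1 / real k) * z powr (1 / real k - 1) * (real k * y ^ (k - 1)))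
        = K * (C y ^ (k - 1) * z powr (1 / real k - 1)) * (s - C y) ^ (m - k) * y ^ (k - 1)"
      using kpos by (simp add: field_simps)
    also have "\<dots> = K * (s - C y) ^ (m - k) * y ^ (k - 1)" unfolding key by simp
    finally have eqd: "K * C y ^ (k - 1) * (s - C y) ^ (m - k) * ((1 / real k) * z powr (1 / real k - 1) * (real k * y ^ (k - 1)))
        = K * (s - C y) ^ (m - k) * y ^ (k - 1)" .
    have "(s - C y) ^ (m - k) \<le> (s - y) ^ (m - k)"
      using Cle[OF y(1)] Cge[OF y(1)] y assms by (intro power_mono) auto
    then have "0 \<le> K * y ^ (k - 1) * ((s - y) ^ (m - k) - (s - C y) ^ (m - k))"
      using y by (intro mult_nonneg_nonneg) (auto simp: K_def)
    then have "0 \<le> 0 + K * y ^ (k - 1) * (s - y) ^ (m - k)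
        - K * C y ^ (k - 1) * (s - C y) ^ (m - k) * ((1 / real k) * z powr (1 / real k - 1) * (real k * y ^ (k - 1)))"
      unfolding eqd by (simp add: algebra_simps)
    then show "\<exists>d. DERIV \<psi> y :> d \<and> 0 \<le> d" using dpsi by blast
  qed
  then show ?thesis using C0 Cb Gf_0[OF assms(1)] by (simp add: \<psi>_def)
qed


lemma TW:
  fixes a b c :: real
  assumes k1: "1 \<le> k" and ab: "0 \<le> a" "0 \<le> b" and c: "0 \<le> c" "c ^ k = a ^ k + b ^ k"
  shows "(\<Sum>j\<le>m. if j < k \<and> m - j < k then real (m choose j) * b ^ j * a ^ (m - j) else 0)
       \<le> (\<Sum>j\<le>m. if j < k then real (m choose j) * c ^ j * (a + b - c) ^ (m - j) else 0)"
proof -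
  have cle: "c \<le> a + b"
    using pow_sum_le[OF ab k1] c ab k1 by - (rule pow_le_base[of _ k], auto)
  define s where "s = a + b"
  define f where "f = (\<lambda>j. real (m choose j) * b ^ j * a ^ (m - j))"
  define g where "g = (\<lambda>j. real (m choose j) * c ^ j * (a + b - c) ^ (m - j))"
  have sumf: "(\<Sum>j\<le>m. f j) = s ^ m"
    unfolding f_def s_def using binomial_ring[of b a m] by (simp add: add.commute)
  have sumg: "(\<Sum>j\<le>m. g j) = s ^ m"
    unfolding g_def s_def using binomial_ring[of c "a + b - c" m] by simp
  have gnn: "0 \<le> g j" for j unfolding g_def using c cle by simp
  consider "m < k" | "2 * k \<le> m + 1" | "k \<le> m" "m + 1 < 2 * k" by linarith
  then show ?thesis
  proof cases
    case 1
    have "(\<Sum>j\<le>m. if j < k \<and> m - j < k then real (m choose j) * b ^ j * a ^ (m - j) else 0) = (\<Sum>j\<le>m. f j)"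
      using 1 by (intro sum.cong) (auto simp: f_def)
    moreover have "(\<Sum>j\<le>m. if j < k then real (m choose j) * c ^ j * (a + b - c) ^ (m - j) else 0) = (\<Sum>j\<le>m. g j)"
      using 1 by (intro sum.cong) (auto simp: g_def)
    ultimately show ?thesis using sumf sumg by simp
  next
    case 2
    have "(\<Sum>j\<le>m. if j < k \<and> m - j < k then real (m choose j) * b ^ j * a ^ (m - j) else 0) = 0"
      using 2 by (intro sum.neutral) auto
    moreover have "0 \<le> (\<Sum>j\<le>m. if j < k then real (m choose j) * c ^ j * (a + b - c) ^ (m - j) else 0)"
      using gnn by (intro sum_nonneg) (auto simp: g_def)
    ultimately show ?thesis by simp
  next
    case 3
    have splitf: "(\<Sum>j\<le>m. f j) = (\<Sum>j\<le>m. if j < k \<and> m - j < k then f j else 0)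
        + (\<Sum>j\<le>m. if k \<le> j then f j else 0) + (\<Sum>j\<le>m. if j \<le> m - k then f j else 0)"
      unfolding sum.distrib[symmetric] using 3 by (intro sum.cong) auto
    have splitg: "(\<Sum>j\<le>m. g j) = (\<Sum>j\<le>m. if j < k then g j else 0) + (\<Sum>j\<le>m. if k \<le> j then g j else 0)"
      unfolding sum.distrib[symmetric] by (intro sum.cong) auto
    have f1: "(\<Sum>j\<le>m. if k \<le> j then f j else 0) = Gf s m k b"
    proof -
      have "(\<Sum>j\<le>m. if k \<le> j then f j else 0) = (\<Sum>j\<in>{x\<in>{..m}. k \<le> x}. f j)"
        by (rule sum.inter_filter[symmetric]) simp
      also have "{x\<in>{..m}. k \<le> x} = {k..m}" by auto
      finally show ?thesis unfolding Gf_def f_def s_def by simp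
    qed
    have f2: "(\<Sum>j\<le>m. if j \<le> m - k then f j else 0) = Gf s m k a"
    proof -
      have "(\<Sum>j\<le>m. if j \<le> m - k then f j else 0) = (\<Sum>j\<in>{x\<in>{..m}. x \<le> m - k}. f j)"
        by (rule sum.inter_filter[symmetric]) simp
      also have "{x\<in>{..m}. x \<le> m - k} = {..m - k}" by auto
      also have "(\<Sum>j\<in>{..m - k}. f j) = (\<Sum>i\<in>{k..m}. f (m - i))"
        by (rule sum.reindex_bij_witness[where i="\<lambda>i. m - i" and j="\<lambda>j. m - j"]) (use 3 in auto)
      also have "\<dots> = Gf s m k a"
        unfolding Gf_def f_def s_def
        by (intro sum.cong refl) (auto simp: binomial_symmetric[symmetric] mult.commute mult.left_commute)
      finally show ?thesis .
    qed
    have g1: "(\<Sum>j\<le>m. if k \<le> j then g j else 0) = Gf s m k c"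
    proof -
      have "(\<Sum>j\<le>m. if k \<le> j then g j else 0) = (\<Sum>j\<in>{x\<in>{..m}. k \<le> x}. g j)"
        by (rule sum.inter_filter[symmetric]) simp
      also have "{x\<in>{..m}. k \<le> x} = {k..m}" by auto
      finally show ?thesis unfolding Gf_def g_def s_def by simp
    qed
    have sub: "Gf s m k c \<le> Gf s m k a + Gf s m k b"
      by (rule Gf_subadd) (use 3 k1 ab c in \<open>auto simp: s_def\<close>)
    have "(\<Sum>j\<le>m. if j < k \<and> m - j < k then real (m choose j) * b ^ j * a ^ (m - j) else 0)
        = (\<Sum>j\<le>m. if j < k \<and> m - j < k then f j else 0)" unfolding f_def by (rule refl)
    also have "\<dots> = s ^ m - Gf s m k b - Gf s m k a" using splitf sumf f1 f2 by simp
    also have "\<dots> \<le> s ^ m - Gf s m k c" using sub by simp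
    also have "\<dots> = (\<Sum>j\<le>m. if j < k then g j else 0)" using splitg sumg g1 by simp
    also have "\<dots> = (\<Sum>j\<le>m. if j < k then real (m choose j) * c ^ j * (a + b - c) ^ (m - j) else 0)"
      unfolding g_def by (rule refl)
    finally show ?thesis .
  qed
qed


lemma tri_conv:
  fixes X :: "nat \<Rightarrow> nat \<Rightarrow> real"
  assumes fin: "finite A" and z: "\<And>j i. (j, i) \<in> A \<Longrightarrow> n < j + i \<Longrightarrow> X j i = 0"
  shows "(\<Sum>(j, i)\<in>A. X j i) = (\<Sum>m\<le>n. \<Sum>j\<le>m. if (j, m - j) \<in> A then X j (m - j) else 0)"
proof -
  define T where "T = {(j, i). j + i \<le> (n::nat)}"
  define h where "h = (\<lambda>j i. if (j, i) \<in> A then X j i else 0)"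
  have zz: "j + i \<le> n" if "(j, i) \<in> A" "X j i \<noteq> 0" for j i
    using z[OF that(1)] that(2) by force
  have finT: "finite T"
    by (rule finite_subset[of _ "{..n} \<times> {..n}"]) (auto simp: T_def)
  have "(\<Sum>(j, i)\<in>A. X j i) = (\<Sum>(j, i)\<in>A. h j i)"
    by (intro sum.cong) (auto simp: h_def)
  also have "\<dots> = (\<Sum>(j, i)\<in>A \<union> T. h j i)"
    by (rule sum.mono_neutral_left) (auto simp: fin finT h_def)
  also have "\<dots> = (\<Sum>(j, i)\<in>T. h j i)"
    using zz by (intro sum.mono_neutral_right) (auto simp: fin finT[unfolded T_def] h_def T_def)
  also have "\<dots> = (\<Sum>m\<le>n. \<Sum>j\<le>m. h j (m - j))"
    unfolding T_def by (rule sum.triangle_reindex_eq)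
  finally show ?thesis by (simp add: h_def)
qed

lemma merge:
  fixes a b c t :: real
  assumes k1: "1 \<le> k" and ab: "0 \<le> a" "0 \<le> b" and c: "0 \<le> c" "c ^ k = a ^ k + b ^ k" and t: "a + b \<le> t"
  shows "(\<Sum>j<k. real (n choose j) * b ^ j * (\<Sum>i<k. real ((n - j) choose i) * a ^ i * (t - b - a) ^ (n - j - i)))
       \<le> (\<Sum>i<k. real (n choose i) * c ^ i * (t - c) ^ (n - i))"
proof -
  have cle: "c \<le> a + b"
    using pow_sum_le[OF ab k1] c ab k1 by - (rule pow_le_base[of _ k], auto)
  define d where "d = t - b - a"
  define e where "e = a + b - c"
  have d0: "0 \<le> d" using t by (simp add: d_def)
  have e0: "0 \<le> e" using cle by (simp add: e_def)
  define A where "A = (\<lambda>m. \<Sum>j\<le>m. if j < k \<and> m - j < k then real (m choose j) * b ^ j * a ^ (m - j) else 0)"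
  define B where "B = (\<lambda>m. \<Sum>j\<le>m. if j < k then real (m choose j) * c ^ j * (a + b - c) ^ (m - j) else 0)"
  have cm: "real (n choose j) * real ((n - j) choose (m - j)) = real (n choose m) * real (m choose j)"
    if "j \<le> m" "m \<le> n" for j m
    using choose_mult[OF that] by (metis of_nat_mult)
  define X where "X = (\<lambda>j i. real (n choose j) * b ^ j * (real ((n - j) choose i) * a ^ i * d ^ (n - j - i)))"
  have L: "(\<Sum>j<k. real (n choose j) * b ^ j * (\<Sum>i<k. real ((n - j) choose i) * a ^ i * (t - b - a) ^ (n - j - i)))
      = (\<Sum>(j, i)\<in>{..<k} \<times> {..<k}. X j i)"
    unfolding X_def d_def by (simp add: sum_distrib_left sum.cartesian_product)
  also have "\<dots> = (\<Sum>m\<le>n. \<Sum>j\<le>m. if (j, m - j) \<in> {..<k} \<times> {..<k} then X j (m - j) else 0)"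
    by (rule tri_conv) (auto simp: X_def)
  also have "\<dots> = (\<Sum>m\<le>n. real (n choose m) * d ^ (n - m) * A m)"
  proof (intro sum.cong refl)
    fix m assume m: "m \<in> {..n}"
    show "(\<Sum>j\<le>m. if (j, m - j) \<in> {..<k} \<times> {..<k} then X j (m - j) else 0) = real (n choose m) * d ^ (n - m) * A m"
      unfolding A_def sum_distrib_left
    proof (intro sum.cong refl)
      fix j assume j: "j \<in> {..m}"
      have "n - j - (m - j) = n - m" using j m by auto
      then show "(if (j, m - j) \<in> {..<k} \<times> {..<k} then X j (m - j) else 0) =
          real (n choose m) * d ^ (n - m) * (if j < k \<and> m - j < k then real (m choose j) * b ^ j * a ^ (m - j) else 0)"
        using cm[of j m] j m unfolding X_def
        by (auto simp: algebra_simps; metis mult.assoc mult.commute)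
    qed
  qed
  finally have L': "(\<Sum>j<k. real (n choose j) * b ^ j * (\<Sum>i<k. real ((n - j) choose i) * a ^ i * (t - b - a) ^ (n - j - i)))
      = (\<Sum>m\<le>n. real (n choose m) * d ^ (n - m) * A m)" .
  define Y where "Y = (\<lambda>i l. real (n choose i) * c ^ i * (real ((n - i) choose l) * e ^ l * d ^ (n - i - l)))"
  have "(\<Sum>i<k. real (n choose i) * c ^ i * (t - c) ^ (n - i)) = (\<Sum>i<k. real (n choose i) * c ^ i * (e + d) ^ (n - i))"
    by (simp add: d_def e_def)
  also have "\<dots> = (\<Sum>(i, l)\<in>Sigma {..<k} (\<lambda>i. {..n - i}). Y i l)"
    unfolding Y_def by (simp add: binomial_ring sum_distrib_left sum.Sigma)
  also have "\<dots> = (\<Sum>m\<le>n. \<Sum>j\<le>m. if (j, m - j) \<in> Sigma {..<k} (\<lambda>i. {..n - i}) then Y j (m - j) else 0)"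
    by (rule tri_conv) (auto simp: Y_def)
  also have "\<dots> = (\<Sum>m\<le>n. real (n choose m) * d ^ (n - m) * B m)"
  proof (intro sum.cong refl)
    fix m assume m: "m \<in> {..n}"
    show "(\<Sum>j\<le>m. if (j, m - j) \<in> Sigma {..<k} (\<lambda>i. {..n - i}) then Y j (m - j) else 0) = real (n choose m) * d ^ (n - m) * B m"
      unfolding B_def sum_distrib_left
    proof (intro sum.cong refl)
      fix j assume j: "j \<in> {..m}"
      have "n - j - (m - j) = n - m" using j m by auto
      then show "(if (j, m - j) \<in> Sigma {..<k} (\<lambda>i. {..n - i}) then Y j (m - j) else 0) =
          real (n choose m) * d ^ (n - m) * (if j < k then real (m choose j) * c ^ j * (a + b - c) ^ (m - j) else 0)"
        using cm[of j m] j m unfolding Y_def e_def[symmetric]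
        by (auto simp: algebra_simps; metis mult.assoc mult.commute)
    qed
  qed
  finally have R': "(\<Sum>i<k. real (n choose i) * c ^ i * (t - c) ^ (n - i)) = (\<Sum>m\<le>n. real (n choose m) * d ^ (n - m) * B m)" .
  have "(\<Sum>m\<le>n. real (n choose m) * d ^ (n - m) * A m) \<le> (\<Sum>m\<le>n. real (n choose m) * d ^ (n - m) * B m)"
  proof (rule sum_mono)
    fix m assume "m \<in> {..n}"
    show "real (n choose m) * d ^ (n - m) * A m \<le> real (n choose m) * d ^ (n - m) * B m"
      using TW[OF k1 ab c, of m] d0 unfolding A_def B_def by (intro mult_left_mono) auto
  qed
  then show ?thesis using L' R' by simp
qed


lemma root_pow0:
  fixes z :: real
  assumes "0 \<le> z" "1 \<le> k"
  shows "(z powr (1 / real k)) ^ k = z"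
proof (cases "z = 0")
  case True then show ?thesis using assms by simp
next
  case False then show ?thesis using assms root_pow by simp
qed

lemma sum_pow_le:
  fixes p :: "nat \<Rightarrow> real"
  assumes "\<forall>i\<in>{1..r}. 0 \<le> p i" "1 \<le> k"
  shows "(\<Sum>i=1..r. p i ^ k) \<le> (\<Sum>i=1..r. p i) ^ k"
  using assms(1)
proof (induction r)
  case 0
  then show ?case using assms(2) by simp
next
  case (Suc r)
  have nn: "0 \<le> (\<Sum>i=1..r. p i)" using Suc.prems by (intro sum_nonneg) auto
  have "(\<Sum>i=1..Suc r. p i ^ k) = (\<Sum>i=1..r. p i ^ k) + p (Suc r) ^ k" by simp
  also have "\<dots> \<le> (\<Sum>i=1..r. p i) ^ k + p (Suc r) ^ k" using Suc by simp
  also have "\<dots> \<le> ((\<Sum>i=1..r. p i) + p (Suc r)) ^ k"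
    using Suc.prems nn assms(2) by (intro pow_sum_le) auto
  finally show ?case by simp
qed

lemma Psi_bound:
  fixes p :: "nat \<Rightarrow> real"
  assumes k1: "1 \<le> k" and r1: "1 \<le> r" and pnn: "\<forall>i\<in>{1..r}. 0 \<le> p i" and pt: "(\<Sum>i=1..r. p i) \<le> t"
  shows "Psi n t p (\<lambda>_. k) r \<le> (\<Sum>i<k. real (n choose i) * ((\<Sum>i=1..r. p i ^ k) powr (1 / real k)) ^ i
            * (t - (\<Sum>i=1..r. p i ^ k) powr (1 / real k)) ^ (n - i))"
  using r1 pnn pt
proof (induction r arbitrary: n t rule: dec_induct)
  case base
  have "(p 1 ^ k) powr (1 / real k) = p 1"
    using root_pow0[of "p 1 ^ k" k] base.prems k1
    by - (rule power_eq_imp_eq_base[of _ k], auto)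
  then show ?case by simp
next
  case (step r)
  define p' where "p' = p (Suc r)"
  define q where "q = (\<Sum>i=1..r. p i ^ k) powr (1 / real k)"
  define Q where "Q = (\<Sum>i=1..Suc r. p i ^ k) powr (1 / real k)"
  have pnn: "\<forall>i\<in>{1..r}. 0 \<le> p i" using step.prems by auto
  have p'0: "0 \<le> p'" using step.prems step.hyps by (auto simp: p'_def)
  have S0: "0 \<le> (\<Sum>i=1..r. p i ^ k)" using pnn by (intro sum_nonneg) auto
  have S1: "0 \<le> (\<Sum>i=1..Suc r. p i ^ k)" using step.prems by (intro sum_nonneg) auto
  have q0: "0 \<le> q" by (simp add: q_def)
  have Q0: "0 \<le> Q" by (simp add: Q_def)
  have qk: "q ^ k = (\<Sum>i=1..r. p i ^ k)" unfolding q_def by (rule root_pow0[OF S0 k1])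
  have Qk: "Q ^ k = q ^ k + p' ^ k" unfolding Q_def qk p'_def by (subst root_pow0[OF S1 k1]) simp
  have Sle: "(\<Sum>i=1..r. p i) \<le> t - p'" using step.prems by (simp add: p'_def)
  have qle: "q \<le> (\<Sum>i=1..r. p i)"
    using qk sum_pow_le[OF pnn k1] pnn k1 by - (rule pow_le_base[of _ k], auto intro: sum_nonneg)
  have "Psi n t p (\<lambda>_. k) (Suc r) = (\<Sum>j<k. real (n choose j) * p' ^ j * Psi (n - j) (t - p') p (\<lambda>_. k) r)"
    by (simp add: p'_def)
  also have "\<dots> \<le> (\<Sum>j<k. real (n choose j) * p' ^ j * (\<Sum>i<k. real ((n - j) choose i) * q ^ i * (t - p' - q) ^ (n - j - i)))"
  proof (rule sum_mono)
    fix j assume "j \<in> {..<k}"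
    show "real (n choose j) * p' ^ j * Psi (n - j) (t - p') p (\<lambda>_. k) r
        \<le> real (n choose j) * p' ^ j * (\<Sum>i<k. real ((n - j) choose i) * q ^ i * (t - p' - q) ^ (n - j - i))"
      using step.IH[OF pnn Sle, of "n - j"] p'0 unfolding q_def by (intro mult_left_mono) auto
  qed
  also have "\<dots> \<le> (\<Sum>i<k. real (n choose i) * Q ^ i * (t - Q) ^ (n - i))"
    by (rule merge[OF k1 q0 p'0 Q0 Qk]) (use qle Sle in simp)
  finally show ?case by (simp add: Q_def)
qed


lemma single_bin:
  assumes P: "set_pmf P \<subseteq> {1..m}"
  shows "measure_pmf.prob (balls_in_bins n P) {\<omega>. k \<le> load n \<omega> i} \<le> real (n choose k) * pmf P i ^ k"
proof (induction n arbitrary: k)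
  case 0
  have "load 0 \<omega> i = 0" for \<omega> by (simp add: load_def)
  then show ?case by (cases k) auto
next
  case (Suc n)
  show ?case
  proof (cases k)
    case 0
    then show ?thesis by (simp add: measure_pmf.prob_le_1)
  next
    case (Suc k')
    define g where "g = (\<lambda>k. measure_pmf.prob (balls_in_bins n P) {\<omega>. k \<le> load n \<omega> i})"
    have g0: "0 \<le> g k" for k by (simp add: g_def)
    have "measure_pmf.prob (balls_in_bins (Suc n) P) {\<omega>. k \<le> load (Suc n) \<omega> i}
        = (\<Sum>y\<in>{1..m}. pmf P y * measure_pmf.prob (balls_in_bins n P) {f. k \<le> load n f i + (if y = i then 1 else 0)})"
      using prob_balls_Suc[OF P, of n "\<lambda>L. k \<le> L i"] by simp
    also have "\<dots> = (\<Sum>y\<in>{1..m}. pmf P y * (if y = i then g k' else g k))"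
    proof (intro sum.cong refl arg_cong2[where f="(*)"])
      fix y assume "y \<in> {1..m}"
      show "measure_pmf.prob (balls_in_bins n P) {f. k \<le> load n f i + (if y = i then 1 else 0)} = (if y = i then g k' else g k)"
        unfolding g_def Suc by (cases "y = i") simp_all
    qed
    also have "\<dots> \<le> (\<Sum>y\<in>{1..m}. pmf P y * g k + (if y = i then pmf P i * g k' else 0))"
      using g0 by (intro sum_mono) (auto simp: pmf_nonneg)
    also have "\<dots> = g k + (if i \<in> {1..m} then pmf P i * g k' else 0)"
      using P by (simp add: sum.distrib sum_distrib_right[symmetric] sum_pmf_eq_1)
    also have "\<dots> \<le> g k + pmf P i * g k'"
      using g0 by (auto simp: pmf_nonneg)
    also have "\<dots> \<le> real (n choose k) * pmf P i ^ k + pmf P i * (real (n choose k') * pmf P i ^ k')"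
      using Suc.IH[of k] Suc.IH[of k'] unfolding g_def by (intro add_mono mult_left_mono) (auto simp: pmf_nonneg)
    also have "\<dots> = real (Suc n choose k) * pmf P i ^ k"
      unfolding Suc by (simp add: algebra_simps)
    finally show ?thesis .
  qed
qed

theorem mainTheorem10:
  fixes n m k r :: nat and P :: "nat pmf"
  assumes "m \<ge> 2" and "k \<ge> 1" and "1 \<le> r" and "r < m"
    and "set_pmf P \<subseteq> {1..m}"
    and "(\<Sum>i=1..r. pmf P i) < 1"
  shows "measure_pmf.prob (binomial_pmf n (knorm_r P k r)) {k..}
           \<le> measure_pmf.prob (balls_in_bins n P) {\<omega>. max_load_r n r \<omega> \<ge> k}
         \<and> measure_pmf.prob (balls_in_bins n P) {\<omega>. max_load_r n r \<omega> \<ge> k}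
           \<le> real (n choose k) * knorm_r P k r ^ k"
proof -
  note P = assms(5)
  have k1: "1 \<le> k" and r1: "1 \<le> r" and rm: "r \<le> m" using assms by auto
  define q where "q = knorm_r P k r"
  define S where "S = (\<Sum>i=1..r. pmf P i ^ k)"
  have pnn: "\<forall>i\<in>{1..r}. 0 \<le> pmf P i" by (simp add: pmf_nonneg)
  have S0: "0 \<le> S" unfolding S_def by (intro sum_nonneg) (simp add: pmf_nonneg)
  have qS: "q = S powr (1 / real k)" by (simp add: q_def S_def knorm_r_def)
  have q0: "0 \<le> q" by (simp add: qS)
  have qk: "q ^ k = S" unfolding qS by (rule root_pow0[OF S0 k1])
  have qle: "q \<le> (\<Sum>i=1..r. pmf P i)"
    using qk sum_pow_le[OF pnn k1] pnn k1 unfolding S_def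
    by - (rule pow_le_base[of _ k], auto intro: sum_nonneg)
  have q1: "q \<le> 1" using qle assms(6) by simp
  have maxeq: "{\<omega>. k \<le> max_load_r n r \<omega>} = (\<Union>i\<in>{1..r}. {\<omega>. k \<le> load n \<omega> i})"
    using r1 by (auto simp: max_load_r_def Max_ge_iff)
  have compl: "{\<omega>. k \<le> max_load_r n r \<omega>} = UNIV - {\<omega>. \<forall>i\<in>{1..r}. load n \<omega> i < (\<lambda>_. k) i}"
    unfolding maxeq by auto
  have probM: "measure_pmf.prob (balls_in_bins n P) {\<omega>. k \<le> max_load_r n r \<omega>} = 1 - Psi n 1 (pmf P) (\<lambda>_. k) r"
    unfolding compl using prob_all_lt[OF P rm, of n "\<lambda>_. k"]
    by (subst measure_pmf.prob_compl[unfolded space_measure_pmf]) auto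
  have PsiB: "Psi n 1 (pmf P) (\<lambda>_. k) r \<le> (\<Sum>i<k. real (n choose i) * q ^ i * (1 - q) ^ (n - i))"
    using Psi_bound[OF k1 r1 pnn, of 1 n] assms(6) unfolding qS S_def by simp
  have probB: "measure_pmf.prob (binomial_pmf n q) {k..} = 1 - (\<Sum>i<k. real (n choose i) * q ^ i * (1 - q) ^ (n - i))"
  proof -
    have e: "{k..} = UNIV - {..<k}" by auto
    have "measure_pmf.prob (binomial_pmf n q) {k..} = 1 - measure_pmf.prob (binomial_pmf n q) {..<k}"
      unfolding e by (subst measure_pmf.prob_compl[unfolded space_measure_pmf]) auto
    also have "measure_pmf.prob (binomial_pmf n q) {..<k} = (\<Sum>i<k. pmf (binomial_pmf n q) i)"
      by (simp add: measure_measure_pmf_finite)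
    also have "\<dots> = (\<Sum>i<k. real (n choose i) * q ^ i * (1 - q) ^ (n - i))"
      using q0 q1 by simp
    finally show ?thesis .
  qed
  have lower: "measure_pmf.prob (binomial_pmf n q) {k..} \<le> measure_pmf.prob (balls_in_bins n P) {\<omega>. k \<le> max_load_r n r \<omega>}"
    unfolding probB probM using PsiB by simp
  have "measure_pmf.prob (balls_in_bins n P) {\<omega>. k \<le> max_load_r n r \<omega>}
      \<le> (\<Sum>i\<in>{1..r}. measure_pmf.prob (balls_in_bins n P) {\<omega>. k \<le> load n \<omega> i})"
    unfolding maxeq by (rule measure_pmf.finite_measure_subadditive_finite) auto
  also have "\<dots> \<le> (\<Sum>i\<in>{1..r}. real (n choose k) * pmf P i ^ k)"
    by (intro sum_mono single_bin[OF P])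
  also have "\<dots> = real (n choose k) * q ^ k"
    by (simp add: qk S_def sum_distrib_left)
  finally have upper: "measure_pmf.prob (balls_in_bins n P) {\<omega>. k \<le> max_load_r n r \<omega>} \<le> real (n choose k) * q ^ k" .
  show ?thesis using lower upper by (simp add: q_def)
qed

end
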